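(* Consider the centralized caching problem with uncoded prefetching with $N$ files, $K$ users, and local cache size of $M$ files per user, $t=KM/N$. For every file size $F$, every $\epsilon>0$, and every statistics $\boldsymbol{s}$, $$\min_{\boldsymbol{\mathcal{M}}}R^*_\epsilon(\boldsymbol{s},\boldsymbol{\mathcal{M}})\ \ge\ \mathrm{Conv}\left(\frac{\binom{K}{t+1}-\binom{K-N_{\mathrm{e}}(\boldsymbol{s})}{t+1}}{\binom{K}{t}}\right)-\left(\frac{1}{F}+N_{\mathrm{e}}^2(\boldsymbol{s})\epsilon\right),$$ where the minimum is over all uncoded prefetchings satisfying the memory constraint and $\mathrm{Conv}(f(t))$ denotes the lower convex envelope of the points $\{(t,f(t)):t\in\{0,1,\dots,K\}\}$, evaluated at $t=KM/N$.
   Context: Setting: $N$ files $W_1,\dots,W_N$ of $F$ bits each, all bits i.i.d. Bernoulli$(1/2)$; $K$ users each with $MF$ bits of cache, $M\in[0,N]$. An uncoded prefetching $\boldsymbol{\mathcal{M}}=(\mathcal{M}_1,\dots,\mathcal{M}_K)$: each $\mathcal{M}_k$ is a set of at most $MF$ bit indices and user $k$ stores those bits. For a demand $\boldsymbol{d}\in\{1,\dots,N\}^K$, a rate $R$ is $\epsilon$-achievable if there are an encoder $X=\psi(W_1,\dots,W_N)\in\{0,1\}^{RF}$ and decoders such that each user $k$ recovers $W_{d_k}$ from $X$ and its cached bits with error probability at most $\epsilon$; $R^*_\epsilon(\boldsymbol{d},\boldsymbol{\mathcal{M}})$ is the minimum such rate. The statistics $\boldsymbol{s}(\boldsymbol{d})$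 of a demand is the length-$N$ array, sorted in nonincreasing order, whose $i$-th entry is the number of users requesting the $i$-th most requested file; the type $\mathcal{D}_{\boldsymbol{s}}$ is the set of demands with statistics $\boldsymbol{s}$; $N_{\mathrm{e}}(\boldsymbol{s})$ is the number of distinct files requested by any demand in $\mathcal{D}_{\boldsymbol{s}}$ (number of nonzero entries of $\boldsymbol{s}$). $R^*_\epsilon(\boldsymbol{s},\boldsymbol{\mathcal{M}})=\frac{1}{|\mathcal{D}_{\boldsymbol{s}}|}\sum_{\boldsymbol{d}\in\mathcal{D}_{\boldsymbol{s}}}R^*_\epsilon(\boldsymbol{d},\boldsymbol{\mathcal{M}})$. Convention: $\binom{n}{k}=0$ when $k>n$. *)

theory Defs
  imports Complex_Main
begin

text \<open>A library realisation: bit (n,j) is bit j of file n (files 0..<N, bits 0..<F);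
  all other positions are fixed to False. The uniform distribution on this finite set
  is exactly N F i.i.d. Bernoulli(1/2) bits.\<close>
definition lib_space :: "nat \<Rightarrow> nat \<Rightarrow> (nat \<times> nat \<Rightarrow> bool) set" where
  "lib_space N F = {w. \<forall>i. i \<notin> {..<N} \<times> {..<F} \<longrightarrow> w i = False}"

definition cache_view :: "(nat \<times> nat) set \<Rightarrow> (nat \<times> nat \<Rightarrow> bool) \<Rightarrow> (nat \<times> nat \<Rightarrow> bool)" where
  "cache_view Mk w = (\<lambda>i. if i \<in> Mk then w i else False)"

definition user_err :: "nat \<Rightarrow> nat \<Rightarrow> ((nat \<times> nat \<Rightarrow> bool) \<Rightarrow> bool list)
    \<Rightarrow> (bool list \<Rightarrow> (nat \<times> nat \<Rightarrow> bool) \<Rightarrow> nat \<Rightarrow> bool) \<Rightarrow> (nat \<times> nat) set \<Rightarrow> nat \<Rightarrow> real" where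
  "user_err N F psi phi Mk n =
     real (card {w \<in> lib_space N F. \<exists>j<F. phi (psi w) (cache_view Mk w) j \<noteq> w (n, j)})
     / real (card (lib_space N F))"

definition achievable_len :: "nat \<Rightarrow> nat \<Rightarrow> nat \<Rightarrow> real \<Rightarrow> nat list \<Rightarrow> (nat \<Rightarrow> (nat \<times> nat) set) \<Rightarrow> nat \<Rightarrow> bool" where
  "achievable_len N K F eps d P L \<longleftrightarrow>
     (\<exists>(psi :: (nat \<times> nat \<Rightarrow> bool) \<Rightarrow> bool list)
        (phi :: nat \<Rightarrow> bool list \<Rightarrow> (nat \<times> nat \<Rightarrow> bool) \<Rightarrow> nat \<Rightarrow> bool).
        (\<forall>w \<in> lib_space N F. length (psi w) = L) \<and>
        (\<forall>k<K. user_err N F psi (phi k) (P k) (d ! k) \<le> eps))"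

definition opt_rate :: "nat \<Rightarrow> nat \<Rightarrow> nat \<Rightarrow> real \<Rightarrow> nat list \<Rightarrow> (nat \<Rightarrow> (nat \<times> nat) set) \<Rightarrow> real" where
  "opt_rate N K F eps d P = real (LEAST L. achievable_len N K F eps d P L) / real F"

definition demands :: "nat \<Rightarrow> nat \<Rightarrow> nat list set" where
  "demands N K = {d. length d = K \<and> set d \<subseteq> {..<N}}"

definition stats :: "nat \<Rightarrow> nat list \<Rightarrow> nat list" where
  "stats N d = rev (sort (map (\<lambda>n. count_list d n) [0..<N]))"

definition demand_type :: "nat \<Rightarrow> nat \<Rightarrow> nat list \<Rightarrow> nat list set" where
  "demand_type N K s = {d \<in> demands N K. stats N d = s}"

definition Ne :: "nat list \<Rightarrow> nat" where
  "Ne s = length (filter (\<lambda>x. x \<noteq> 0) s)"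

definition avg_rate :: "nat \<Rightarrow> nat \<Rightarrow> nat \<Rightarrow> real \<Rightarrow> nat list \<Rightarrow> (nat \<Rightarrow> (nat \<times> nat) set) \<Rightarrow> real" where
  "avg_rate N K F eps s P =
     (\<Sum>d \<in> demand_type N K s. opt_rate N K F eps d P) / real (card (demand_type N K s))"

definition uncoded_prefetching :: "nat \<Rightarrow> nat \<Rightarrow> nat \<Rightarrow> real \<Rightarrow> (nat \<Rightarrow> (nat \<times> nat) set) \<Rightarrow> bool" where
  "uncoded_prefetching N K F M P \<longleftrightarrow>
     (\<forall>k<K. P k \<subseteq> {..<N} \<times> {..<F} \<and> real (card (P k)) \<le> M * real F)"

definition lower_conv_env :: "nat \<Rightarrow> (nat \<Rightarrow> real) \<Rightarrow> real \<Rightarrow> real" where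
  "lower_conv_env K f x = Inf {\<Sum>i\<le>K. l i * f i | l :: nat \<Rightarrow> real.
       (\<forall>i\<le>K. 0 \<le> l i) \<and> (\<Sum>i\<le>K. l i) = 1 \<and> (\<Sum>i\<le>K. l i * real i) = x}"

end

theory Submission
  imports Defs "HOL-Library.Multiset"
begin


definition posA :: "nat \<Rightarrow> nat \<Rightarrow> (nat \<times> nat) set" where
  "posA N F = {..<N} \<times> {..<F}"

lemma lib_space_alt: "lib_space N F = {w. {i. w i} \<subseteq> posA N F}"
  unfolding lib_space_def posA_def by auto

lemma card_lib_space: "card (lib_space N F) = 2 ^ (N * F)"
proof -
  have "bij_betw (\<lambda>w. {i. w i}) (lib_space N F) (Pow (posA N F))"
    unfolding lib_space_alt
    by (rule bij_betw_byWitness[where f'="\<lambda>S i. i \<in> S"]) auto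
  then have "card (lib_space N F) = card (Pow (posA N F))" by (rule bij_betw_same_card)
  also have "\<dots> = 2 ^ (N*F)" by (simp add: posA_def card_Pow card_cartesian_product)
  finally show ?thesis .
qed

lemma finite_lib_space: "finite (lib_space N F)"
  using card_lib_space[of N F] by (metis card.infinite power_not_zero zero_neq_numeral)

lemma nat_ineq: "(b::nat) > L \<Longrightarrow> b * 2 ^ L \<le> (L + 1) * 2 ^ b"
proof -
  assume "b > L"
  define D where "D = b - L"
  have b: "b = L + D" using \<open>b > L\<close> by (simp add: D_def)
  have "L + D \<le> (L + 1) * (D + 1)" by (simp add: algebra_simps)
  also have "\<dots> \<le> (L + 1) * 2 ^ D" using less_exp[of D] by (intro mult_left_mono) (simp_all add: Suc_le_eq)
  finally have "(L + D) * 2 ^ L \<le> (L + 1) * 2 ^ D * 2 ^ L" by (rule mult_right_mono) auto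
  moreover have "(L+1)*2^(L+D) = ((L+1)*2^D)*2^L" by (simp add: power_add algebra_simps)
  ultimately show ?thesis unfolding b by simp
qed

definition Bset :: "nat \<Rightarrow> nat list \<Rightarrow> (nat \<Rightarrow> (nat\<times>nat) set) \<Rightarrow> nat list \<Rightarrow> (nat\<times>nat) set" where
  "Bset F d P us = {(n,j). j < F \<and> (\<exists>i<length us. n = d!(us!i) \<and> (\<forall>l\<le>i. (n,j) \<notin> P(us!l)))}"

lemma info_bound:
  assumes ach: "achievable_len N K F eps d P L"
    and d: "d \<in> demands N K"
    and us: "set us \<subseteq> {..<K}" and eps: "eps \<ge> 0"
  shows "real (card (Bset F d P us)) * (1 - real (length us) * eps) \<le> real L + 1"
proof -
  obtain psi phi where len: "\<forall>w\<in>lib_space N F. length (psi w) = L"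
    and err: "\<forall>k<K. user_err N F psi (phi k) (P k) (d!k) \<le> eps"
    using ach unfolding achievable_len_def by blast
  define lib where "lib = lib_space N F"
  define m where "m = length us"
  define B where "B = Bset F d P us"
  define G where "G = {w\<in>lib. \<forall>i<m. \<forall>j<F. phi (us!i) (psi w) (cache_view (P(us!i)) w) j = w(d!(us!i), j)}"
  define E where "E i = {w\<in>lib. \<exists>j<F. phi (us!i) (psi w) (cache_view (P (us!i)) w) j \<noteq> w(d!(us!i), j)}" for i
  have finlib: "finite lib" unfolding lib_def by (rule finite_lib_space)
  have cardlib: "card lib = 2^(N*F)" unfolding lib_def by (rule card_lib_space)
  have lenK: "length d = K" and dN: "set d \<subseteq> {..<N}" using d by (auto simp: demands_def)
  have usK: "us!i < K" if "i < m" for i using us that unfolding m_def by (auto simp: set_conv_nth)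
  have dusN: "d!(us!i) < N" if "i < m" for i using usK[OF that] lenK dN by (auto simp: set_conv_nth)
  have libG: "lib - G = (\<Union>i<m. E i)" by (auto simp: G_def E_def)
  have cardE: "real (card (E i)) \<le> eps * real (card lib)" if "i < m" for i
  proof -
    have "user_err N F psi (phi (us!i)) (P (us!i)) (d!(us!i)) \<le> eps" using err usK[OF that] by blast
    then have "real (card (E i)) / real (card lib) \<le> eps" by (simp add: user_err_def E_def lib_def)
    moreover have "real (card lib) > 0" using cardlib by simp
    ultimately show ?thesis by (simp add: divide_le_eq)
  qed
  have "real (card (lib - G)) \<le> (\<Sum>i<m. real (card (E i)))"
    unfolding libG using card_UN_le[of "{..<m}" E] by (simp flip: of_nat_sum)
  also have "\<dots> \<le> (\<Sum>i<m. eps * real (card lib))" by (rule sum_mono) (simp add: cardE)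
  finally have c1: "real (card (lib - G)) \<le> real m * eps * real (card lib)" by simp
  have GS: "G \<subseteq> lib" by (auto simp: G_def)
  have c2: "real (card G) \<ge> (1 - real m * eps) * real (card lib)"
  proof -
    have "card (lib - G) = card lib - card G" using GS finlib by (simp add: card_Diff_subset finite_subset)
    moreover have "card G \<le> card lib" using GS finlib by (simp add: card_mono)
    ultimately have "real (card (lib - G)) = real (card lib) - real (card G)" by simp
    then show ?thesis using c1 by (simp add: algebra_simps)
  qed
  have BA: "B \<subseteq> posA N F" using dusN unfolding B_def Bset_def posA_def m_def by auto
  have finA: "finite (posA N F)" by (simp add: posA_def)
  have cardA: "card (posA N F) = N * F" by (simp add: posA_def card_cartesian_product)
  define h where "h w = ({i. w i} - B, psi w)" for w
  have inj: "inj_on h G"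
  proof (rule inj_onI)
    fix w w' assume wG: "w \<in> G" and w'G: "w' \<in> G" and hw: "h w = h w'"
    have out: "w q = w' q" if "q \<notin> B" for q
    proof -
      have "{i. w i} - B = {i. w' i} - B" using hw by (simp add: h_def)
      then show ?thesis using that by blast
    qed
    have ps: "psi w = psi w'" using hw by (simp add: h_def)
    have claim: "\<forall>j<F. w(d!(us!i),j) = w'(d!(us!i),j)" if "i < m" for i
      using that
    proof (induction i rule: less_induct)
      case (less i)
      have cv: "cache_view (P(us!i)) w = cache_view (P(us!i)) w'"
      proof
        fix q
        show "cache_view (P(us!i)) w q = cache_view (P(us!i)) w' q"
        proof (cases "q \<in> P(us!i)")
          case True
          show ?thesis
          proof (cases "q \<in> B")
            case False then show ?thesis using out by (simp add: cache_view_def)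
          next
            case qB: True
            obtain n j where q: "q = (n,j)" by fastforce
            from qB obtain i' where "j < F" "i' < m" "n = d!(us!i')" "\<forall>l\<le>i'. (n,j) \<notin> P(us!l)"
              unfolding B_def Bset_def q m_def by blast
            moreover have "i' < i" using True calculation(4) q by (metis not_le_imp_less order_refl)
            ultimately show ?thesis using less.IH[of i'] less.prems q by (simp add: cache_view_def)
          qed
        qed (simp add: cache_view_def)
      qed
      show ?case
      proof (intro allI impI)
        fix j assume "j < F"
        have "w(d!(us!i),j) = phi (us!i) (psi w) (cache_view (P(us!i)) w) j"
          using wG less.prems \<open>j < F\<close> by (simp add: G_def)
        also have "\<dots> = phi (us!i) (psi w') (cache_view (P(us!i)) w') j" by (simp add: ps cv)
        also have "\<dots> = w'(d!(us!i),j)"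
          using w'G less.prems \<open>j < F\<close> by (simp add: G_def)
        finally show "w(d!(us!i),j) = w'(d!(us!i),j)" .
      qed
    qed
    show "w = w'"
    proof
      fix q show "w q = w' q"
      proof (cases "q \<in> B")
        case False then show ?thesis by (rule out)
      next
        case True
        obtain n j where q: "q = (n,j)" by fastforce
        from True obtain i where "j < F" "i < m" "n = d!(us!i)"
          unfolding B_def Bset_def q m_def by blast
        then show ?thesis using claim q by blast
      qed
    qed
  qed
  have img: "h ` G \<subseteq> Pow (posA N F - B) \<times> {xs. set xs \<subseteq> (UNIV::bool set) \<and> length xs = L}"
    using len GS by (auto simp: h_def lib_def lib_space_alt)
  have "card G = card (h ` G)" using inj by (simp add: card_image)
  also have "\<dots> \<le> card (Pow (posA N F - B) \<times> {xs. set xs \<subseteq> (UNIV::bool set) \<and> length xs = L})"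
    by (rule card_mono[OF _ img]) (use finite_lists_length_eq[of "UNIV::bool set" L] finA in simp)
  also have "\<dots> = 2 ^ (N*F - card B) * 2 ^ L"
  proof -
    have cl: "card {xs::bool list. length xs = L} = 2^L" using card_lists_length_eq[of "UNIV::bool set" L] by simp
    have "card (posA N F - B) = N*F - card B" using finA BA cardA by (simp add: card_Diff_subset finite_subset)
    moreover have "finite (posA N F - B)" using finA by simp
    ultimately show ?thesis using cl by (simp add: card_cartesian_product card_Pow)
  qed
  finally have c3: "card G \<le> 2 ^ (N*F - card B) * 2 ^ L" .
  have bNF: "card B \<le> N*F" using BA finA cardA card_mono by metis
  have key: "(1 - real m * eps) * 2 ^ card B \<le> 2 ^ L"
  proof -
    have "(1 - real m * eps) * 2^(N*F) \<le> 2 ^ (N*F - card B) * 2 ^ L"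
    proof -
      have "real (card G) \<le> real (2^(N*F - card B) * 2^L)" using c3 by (simp only: of_nat_le_iff)
      then have "real (card G) \<le> 2^(N*F - card B) * 2^L" by simp
      with c2 have "(1 - real m * eps) * real (card lib) \<le> 2^(N*F - card B) * 2^L" by (rule order_trans)
      moreover have "real (card lib) = 2^(N*F)" using cardlib by simp
      ultimately show ?thesis by simp
    qed
    moreover have "(2::real)^(N*F) = 2^(N*F - card B) * 2^card B" using bNF by (simp flip: power_add)
    ultimately have "2^(N*F - card B) * ((1 - real m * eps) * 2 ^ card B) \<le> 2^(N*F - card B) * 2 ^ L"
      by (simp add: algebra_simps)
    then show ?thesis by simp
  qed
  have mpos: "real m * eps \<ge> 0" using eps by simp
  have "real (card B) * (1 - real m * eps) \<le> real L + 1"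
  proof (cases "card B \<le> L")
    case True
    have "real (card B) * (1 - real m * eps) \<le> real (card B)" using mpos by (simp add: mult_left_le)
    then show ?thesis using True by linarith
  next
    case False
    show ?thesis
    proof (cases "1 - real m * eps \<le> 0")
      case True
      then have "real (card B) * (1 - real m * eps) \<le> 0" by (simp add: mult_nonneg_nonpos)
      then show ?thesis by linarith
    next
      case False2: False
      have "real (card B) * ((1 - real m * eps) * 2 ^ card B) \<le> real (card B) * 2 ^ L"
        using key by (intro mult_left_mono) auto
      also have "\<dots> \<le> (real L + 1) * 2 ^ card B"
      proof -
        have n: "card B * 2^L \<le> (L+1)*2^card B" using nat_ineq[of L "card B"] False by simp
        have "real (card B * 2^L) \<le> real ((L+1)*2^card B)" using n by (simp only: of_nat_le_iff)
        then show ?thesis by (simp add: algebra_simps)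
      qed
      finally have "(real (card B) * (1 - real m * eps)) * 2 ^ card B \<le> (real L + 1) * 2 ^ card B"
        by (simp add: mult_ac)
      then show ?thesis by simp
    qed
  qed
  then show ?thesis by (simp add: B_def m_def)
qed

lemma ach_exists:
  assumes d: "d \<in> demands N K" and eps: "eps \<ge> 0"
  shows "achievable_len N K F eps d P (N*F)"
proof -
  define psi :: "(nat \<times> nat \<Rightarrow> bool) \<Rightarrow> bool list" where "psi w = map (\<lambda>i. w (i div F, i mod F)) [0..<N*F]" for w
  define phi :: "nat \<Rightarrow> bool list \<Rightarrow> (nat \<times> nat \<Rightarrow> bool) \<Rightarrow> nat \<Rightarrow> bool" where "phi k x c j = x ! ((d!k)*F + j)" for k x c j
  have lenK: "length d = K" and dN: "set d \<subseteq> {..<N}" using d by (auto simp: demands_def)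
  have "user_err N F psi (phi k) (P k) (d!k) = 0" if k: "k < K" for k
  proof -
    have n: "d!k < N" using k lenK dN by (auto simp: set_conv_nth)
    have "phi k (psi w) (cache_view (P k) w) j = w (d!k, j)" if j: "j < F" for w j
    proof -
      have "(d!k)*F + j < N*F"
      proof -
        have "(d!k)*F + j < (d!k)*F + F" using j by simp
        also have "\<dots> = (Suc (d!k))*F" by simp
        also have "\<dots> \<le> N*F" using n by (intro mult_right_mono) auto
        finally show ?thesis .
      qed
      then show ?thesis using j by (simp add: phi_def psi_def)
    qed
    then have E: "{w \<in> lib_space N F. \<exists>j<F. phi k (psi w) (cache_view (P k) w) j \<noteq> w (d!k, j)} = {}" by blast
    show ?thesis unfolding user_err_def E by simp
  qed
  then show ?thesis unfolding achievable_len_def using eps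
    by (intro exI[of _ psi] exI[of _ phi]) (simp add: psi_def)
qed

lemma card_Bset_le: "card (Bset F d P us) \<le> length us * F"
proof -
  have "Bset F d P us \<subseteq> (\<Union>i<length us. {d!(us!i)} \<times> {..<F})" unfolding Bset_def by auto
  then have "card (Bset F d P us) \<le> card (\<Union>i<length us. {d!(us!i)} \<times> {..<F})" by (intro card_mono) auto
  also have "\<dots> \<le> (\<Sum>i<length us. card ({d!(us!i)} \<times> {..<F}))" by (rule card_UN_le) simp
  also have "\<dots> = length us * F" by (simp add: card_cartesian_product)
  finally show ?thesis .
qed

lemma opt_rate_bound:
  assumes d: "d \<in> demands N K" and us: "set us \<subseteq> {..<K}" and eps: "eps \<ge> 0" and F: "F > 0"
  shows "opt_rate N K F eps d P \<ge> real (card (Bset F d P us)) / real F - 1 / real F - real (length us)^2 * eps"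
proof -
  define L0 where "L0 = (LEAST L. achievable_len N K F eps d P L)"
  have ach: "achievable_len N K F eps d P L0" using ach_exists[OF d eps, of F P] unfolding L0_def by (rule LeastI)
  define b where "b = real (card (Bset F d P us))"
  define m where "m = real (length us)"
  have ib: "b * (1 - m * eps) \<le> real L0 + 1" using info_bound[OF ach d us eps] by (simp add: b_def m_def)
  have bm: "b \<le> m * real F" using card_Bset_le[of F d P us] unfolding b_def m_def by (metis of_nat_le_iff of_nat_mult)
  have "b * m * eps \<le> m * real F * m * eps" using bm eps by (intro mult_right_mono) (auto simp: m_def)
  then have "b - 1 - m^2 * real F * eps \<le> real L0" using ib by (simp add: algebra_simps power2_eq_square)
  then have "(b - 1 - m^2 * real F * eps) / real F \<le> real L0 / real F" using F by (intro divide_right_mono) auto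
  moreover have "(b - 1 - m^2 * real F * eps) / real F = b / real F - 1 / real F - m^2 * eps" using F by (simp add: field_simps)
  ultimately show ?thesis by (simp add: opt_rate_def L0_def b_def m_def)
qed




fun chain :: "nat list \<Rightarrow> nat set \<Rightarrow> nat list \<Rightarrow> nat list" where
  "chain d seen [] = []"
| "chain d seen (u#p) = (if d!u \<in> seen then chain d seen p else u # chain d (insert (d!u) seen) p)"

lemma chain_set: "set (chain d seen p) \<subseteq> set p"
  by (induction p arbitrary: seen) auto

lemma chain_img: "nth d ` set (chain d seen p) = nth d ` set p - seen"
  by (induction p arbitrary: seen) auto

lemma chain_distinct: "distinct (map (nth d) (chain d seen p))"
proof (induction p arbitrary: seen)
  case Nil then show ?case by simp
next
  case (Cons u p)
  then show ?case using chain_img[of d "insert (d!u) seen" p] by auto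
qed

lemma chain_sigma:
  assumes "\<forall>u\<in>set p. d' ! (\<sigma> u) = d ! u"
  shows "chain d' seen (map \<sigma> p) = map \<sigma> (chain d seen p)"
  using assms by (induction p arbitrary: seen) auto

lemma chain_tau:
  assumes "inj \<tau>" "\<forall>u\<in>set p. u < length d"
  shows "chain (map \<tau> d) (\<tau> ` seen) p = chain d seen p"
  using assms
proof (induction p arbitrary: seen)
  case Nil then show ?case by simp
next
  case (Cons u p)
  have "(\<tau> (d!u) \<in> \<tau> ` seen) = (d!u \<in> seen)" using Cons.prems(1) by (simp add: inj_image_mem_iff)
  moreover have "insert (\<tau> (d!u)) (\<tau> ` seen) = \<tau> ` insert (d!u) seen" by simp
  ultimately show ?case using Cons by (simp del: image_insert)
qed

lemma chain_length: "length (chain d seen p) = card (nth d ` set p - seen)"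
proof -
  have "length (chain d seen p) = length (map (nth d) (chain d seen p))" by simp
  also have "\<dots> = card (set (map (nth d) (chain d seen p)))" using chain_distinct by (metis distinct_card)
  also have "\<dots> = card (nth d ` set p - seen)" using chain_img by simp
  finally show ?thesis .
qed

definition perms :: "nat \<Rightarrow> nat list set" where
  "perms K = {p. distinct p \<and> set p = {..<K}}"

definition ch :: "nat list \<Rightarrow> nat list \<Rightarrow> nat list" where
  "ch d p = chain d {} p"

lemma nth_img_demand: "d \<in> demands N K \<Longrightarrow> nth d ` {..<K} = set d"
  by (auto simp: demands_def set_conv_nth)

lemma ch_props:
  assumes d: "d \<in> demands N K" and p: "p \<in> perms K"
  shows "length (ch d p) = card (set d)" "set (ch d p) \<subseteq> {..<K}" "distinct (ch d p)"
    "distinct (map (nth d) (ch d p))"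
proof -
  show "length (ch d p) = card (set d)" using p nth_img_demand[OF d] by (simp add: ch_def chain_length perms_def)
  show "set (ch d p) \<subseteq> {..<K}" using p chain_set by (fastforce simp: ch_def perms_def)
  show "distinct (map (nth d) (ch d p))" by (simp add: ch_def chain_distinct)
  then show "distinct (ch d p)" by (simp add: distinct_map)
qed

lemma ch_nth_lt:
  assumes d: "d \<in> demands N K" and p: "p \<in> perms K" and i: "i < length (ch d p)"
  shows "ch d p ! i < K"
  using ch_props(2)[OF d p] nth_mem[OF i] by auto

lemma Ne_stats:
  assumes d: "d \<in> demands N K"
  shows "Ne (stats N d) = card (set d)"
proof -
  have lf: "length (filter Q xs) = size (filter_mset Q (mset xs))" for Q and xs :: "nat list"
    by (metis mset_filter size_mset)
  have "Ne (stats N d) = length (filter (\<lambda>x. x \<noteq> 0) (map (count_list d) [0..<N]))"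
    unfolding Ne_def stats_def lf[of _ "rev _"] lf[of _ "map _ _"] by simp
  also have "\<dots> = length (filter (\<lambda>n. count_list d n \<noteq> 0) [0..<N])" by (simp add: filter_map o_def)
  also have "\<dots> = card ({n. count_list d n \<noteq> 0} \<inter> {..<N})" by (simp add: distinct_length_filter atLeast0LessThan)
  also have "{n. count_list d n \<noteq> 0} \<inter> {..<N} = set d" using d by (auto simp: demands_def count_list_0_iff)
  finally show ?thesis .
qed

definition sw :: "nat \<Rightarrow> nat \<Rightarrow> nat \<Rightarrow> nat" where
  "sw a b x = (if x = a then b else if x = b then a else x)"

lemma sw_sw[simp]: "sw a b (sw a b x) = x" by (simp add: sw_def)
lemma inj_sw: "inj (sw a b)" by (metis injI sw_sw)
lemma sw_eq_iff[simp]: "(sw a b x = sw a b y) = (x = y)" by (metis sw_sw)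
lemma sw_less: "x < K \<Longrightarrow> a < K \<Longrightarrow> b < K \<Longrightarrow> sw a b x < K" by (simp add: sw_def)
lemma sw_img: "a < K \<Longrightarrow> b < K \<Longrightarrow> sw a b ` {..<K} = {..<K}"
  apply (auto simp: sw_less)
  by (metis image_eqI lessThan_iff sw_less sw_sw)
lemma sw_eq_swap: "(sw a b x = y) = (x = sw a b y)" by (metis sw_sw)
lemma sw_left[simp]: "sw a b a = b" by (simp add: sw_def)

lemma mset_map_sw: "a < K \<Longrightarrow> b < K \<Longrightarrow> mset (map (sw a b) [0..<K]) = mset [0..<K]"
proof -
  assume ab: "a < K" "b < K"
  have "distinct (map (sw a b) [0..<K])" using inj_on_subset[OF inj_sw subset_UNIV] by (simp add: distinct_map)
  moreover have "set (map (sw a b) [0..<K]) = set [0..<K]" using sw_img[OF ab] by (simp add: lessThan_atLeast0)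
  ultimately show ?thesis using set_eq_iff_mset_eq_distinct[of "map (sw a b) [0..<K]" "[0..<K]"] distinct_upt by blast
qed

lemma stats_mset: "mset d' = mset d \<Longrightarrow> stats N d' = stats N d"
proof -
  assume "mset d' = mset d"
  then have "count_list d' = count_list d" by (metis count_mset ext)
  then show ?thesis by (simp add: stats_def)
qed

lemma count_list_map_sw: "count_list (map (sw a b) d) n = count_list d (sw a b n)"
  by (induction d) (simp_all add: sw_eq_swap)

lemma stats_tau: "a < N \<Longrightarrow> b < N \<Longrightarrow> stats N (map (sw a b) d) = stats N d"
proof -
  assume ab: "a < N" "b < N"
  have "map (count_list (map (sw a b) d)) [0..<N] = map (count_list d) (map (sw a b) [0..<N])"
    by (simp add: count_list_map_sw)
  then have "mset (map (count_list (map (sw a b) d)) [0..<N]) = mset (map (count_list d) [0..<N])"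
    using mset_map_sw[OF ab] by (metis mset_map)
  then show ?thesis unfolding stats_def by (metis sorted_list_of_multiset_mset)
qed

lemma card_invol:
  assumes "\<forall>x\<in>X. f x \<in> X" "\<forall>x\<in>X. f (f x) = x" "\<forall>x\<in>X. Q x = R (f x)"
  shows "card {x\<in>X. Q x} = card {x\<in>X. R x}"
proof -
  have "bij_betw f {x\<in>X. Q x} {x\<in>X. R x}"
    by (rule bij_betw_byWitness[where f'=f]) (use assms in force)+
  then show ?thesis by (rule bij_betw_same_card)
qed

definition Om :: "nat \<Rightarrow> nat \<Rightarrow> nat list \<Rightarrow> (nat list \<times> nat list) set" where
  "Om N K s = demand_type N K s \<times> perms K"

definition cnt :: "nat \<Rightarrow> nat \<Rightarrow> nat list \<Rightarrow> nat \<Rightarrow> nat \<Rightarrow> nat set \<Rightarrow> nat" where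
  "cnt N K s i n S = card {x \<in> Om N K s. i < length (ch (fst x) (snd x)) \<and>
      fst x ! (ch (fst x) (snd x) ! i) = n \<and> S \<inter> set (take (Suc i) (ch (fst x) (snd x))) = {}}"

lemma cnt_tau:
  assumes ab: "a < N" "b < N"
  shows "cnt N K s i n S = cnt N K s i (sw a b n) S"
proof -
  define f where "f x = (map (sw a b) (fst x), snd x)" for x :: "nat list \<times> nat list"
  have A1: "\<forall>x\<in>Om N K s. f x \<in> Om N K s \<and> f (f x) = x \<and>
      ((i < length (ch (fst x) (snd x)) \<and> fst x ! (ch (fst x) (snd x) ! i) = n \<and> S \<inter> set (take (Suc i) (ch (fst x) (snd x))) = {})
     = (i < length (ch (fst (f x)) (snd (f x))) \<and> fst (f x) ! (ch (fst (f x)) (snd (f x)) ! i) = sw a b n \<and> S \<inter> set (take (Suc i) (ch (fst (f x)) (snd (f x)))) = {}))"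
  proof
    fix x assume x: "x \<in> Om N K s"
    obtain d p where xdp: "x = (d,p)" by fastforce
    have d: "d \<in> demands N K" "stats N d = s" and p: "p \<in> perms K"
      using x xdp by (auto simp: Om_def demand_type_def)
    have d': "map (sw a b) d \<in> demands N K" using d(1) ab by (auto simp: demands_def sw_less)
    have i1: "f x \<in> Om N K s" using d p d' stats_tau[OF ab, of d] xdp
      by (simp add: Om_def demand_type_def f_def)
    have i2: "f (f x) = x" by (simp add: f_def xdp map_idI)
    have pl: "\<forall>u\<in>set p. u < length d" using p d by (auto simp: perms_def demands_def)
    have chq: "ch (map (sw a b) d) p = ch d p" unfolding ch_def
      using chain_tau[OF inj_sw pl, where seen="{}"] by simp
    have lt: "ch d p ! i < length d" if "i < length (ch d p)"
      using ch_nth_lt[OF d(1) p that] d(1) by (auto simp: demands_def)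
    show "f x \<in> Om N K s \<and> f (f x) = x \<and> ((i < length (ch (fst x) (snd x)) \<and> fst x ! (ch (fst x) (snd x) ! i) = n \<and> S \<inter> set (take (Suc i) (ch (fst x) (snd x))) = {})
     = (i < length (ch (fst (f x)) (snd (f x))) \<and> fst (f x) ! (ch (fst (f x)) (snd (f x)) ! i) = sw a b n \<and> S \<inter> set (take (Suc i) (ch (fst (f x)) (snd (f x)))) = {}))"
      using i1 i2 lt by (auto simp: chq xdp f_def)
  qed
  show ?thesis unfolding cnt_def
    by (rule card_invol[where f=f]) (use A1 in blast)+
qed

lemma cnt_sigma:
  assumes ab: "a < K" "b < K"
  shows "cnt N K s i n S = cnt N K s i n (sw a b ` S)"
proof -
  define f where "f x = (map (\<lambda>k. fst x ! sw a b k) [0..<K], map (sw a b) (snd x))" for x :: "nat list \<times> nat list"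
  have A1: "\<forall>x\<in>Om N K s. f x \<in> Om N K s \<and> f (f x) = x \<and>
      ((i < length (ch (fst x) (snd x)) \<and> fst x ! (ch (fst x) (snd x) ! i) = n \<and> S \<inter> set (take (Suc i) (ch (fst x) (snd x))) = {})
     = (i < length (ch (fst (f x)) (snd (f x))) \<and> fst (f x) ! (ch (fst (f x)) (snd (f x)) ! i) = n \<and> sw a b ` S \<inter> set (take (Suc i) (ch (fst (f x)) (snd (f x)))) = {}))"
  proof
    fix x assume x: "x \<in> Om N K s"
    obtain d p where xdp: "x = (d,p)" by fastforce
    have d: "d \<in> demands N K" "stats N d = s" and p: "p \<in> perms K"
      using x xdp by (auto simp: Om_def demand_type_def)
    have lenK: "length d = K" and dN: "set d \<subseteq> {..<N}" using d(1) by (auto simp: demands_def)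
    define d' where "d' = map (\<lambda>k. d ! sw a b k) [0..<K]"
    have fx: "f x = (d', map (sw a b) p)" by (simp add: f_def xdp d'_def)
    have d'nth: "d' ! (sw a b k) = d ! k" if "k < K" for k
      using that ab by (simp add: d'_def sw_less)
    have d'eq: "d' = map (nth d) (map (sw a b) [0..<K])" by (simp add: d'_def)
    have "mset d' = image_mset (nth d) (mset (map (sw a b) [0..<K]))" by (simp only: d'eq mset_map)
    also have "\<dots> = image_mset (nth d) (mset [0..<K])" by (simp only: mset_map_sw[OF ab])
    also have "\<dots> = mset (map (nth d) [0..<K])" by simp
    also have "\<dots> = mset d" using lenK map_nth[of d] by simp
    finally have ms: "mset d' = mset d" .
    have d'dem: "d' \<in> demands N K"
    proof -
      have "set d' \<subseteq> set d" using ms by (metis mset_eq_setD order_refl)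
      then show ?thesis using dN by (auto simp: demands_def d'_def)
    qed
    have p': "map (sw a b) p \<in> perms K"
      using p inj_on_subset[OF inj_sw subset_UNIV] sw_img[OF ab] by (auto simp: perms_def distinct_map)
    have i1: "f x \<in> Om N K s" using d'dem p' stats_mset[OF ms] d(2) fx
      by (simp add: Om_def demand_type_def)
    have i2: "f (f x) = x"
    proof -
      have "map (\<lambda>k. d' ! sw a b k) [0..<K] = d"
        by (rule nth_equalityI) (auto simp: lenK d'_def ab sw_less)
      then show ?thesis unfolding fx by (simp add: f_def xdp map_idI)
    qed
    have pK: "\<forall>u\<in>set p. u < K" using p by (auto simp: perms_def)
    have chq: "ch d' (map (sw a b) p) = map (sw a b) (ch d p)" unfolding ch_def
      by (rule chain_sigma) (use pK d'nth in auto)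
    have lt: "ch d p ! i < K" if "i < length (ch d p)" using ch_nth_lt[OF d(1) p that] .
    have st: "(sw a b ` S \<inter> set (take (Suc i) (map (sw a b) (ch d p))) = {}) = (S \<inter> set (take (Suc i) (ch d p)) = {})"
      by (simp add: take_map image_Int[OF inj_sw, symmetric])
    show "f x \<in> Om N K s \<and> f (f x) = x \<and> ((i < length (ch (fst x) (snd x)) \<and> fst x ! (ch (fst x) (snd x) ! i) = n \<and> S \<inter> set (take (Suc i) (ch (fst x) (snd x))) = {})
     = (i < length (ch (fst (f x)) (snd (f x))) \<and> fst (f x) ! (ch (fst (f x)) (snd (f x)) ! i) = n \<and> sw a b ` S \<inter> set (take (Suc i) (ch (fst (f x)) (snd (f x)))) = {}))"
      using i1 i2 lt st d'nth unfolding fx by (auto simp: chq xdp)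
  qed
  show ?thesis unfolding cnt_def
    by (rule card_invol[where f=f]) (use A1 in blast)+
qed

lemma cnt_S:
  assumes "S \<subseteq> {..<K}" "S' \<subseteq> {..<K}" "card S = card S'"
  shows "cnt N K s i n S = cnt N K s i n S'"
  using assms
proof (induction "card (S - S')" arbitrary: S rule: less_induct)
  case less
  have finS: "finite S" "finite S'" using less.prems finite_subset by blast+
  show ?case
  proof (cases "S - S' = {}")
    case True
    then have "S \<subseteq> S'" by blast
    then have "S = S'" using card_subset_eq[OF finS(2)] less.prems(3) by blast
    then show ?thesis by simp
  next
    case False
    then obtain a where a: "a \<in> S" "a \<notin> S'" by blast
    have "S' - S \<noteq> {}"
    proof
      assume "S' - S = {}"
      then have "S' \<subseteq> S" by blast
      then have "S' = S" using card_subset_eq[OF finS(1)] less.prems(3) by metis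
      then show False using a by blast
    qed
    then obtain b where b: "b \<in> S'" "b \<notin> S" by blast
    have aK: "a < K" "b < K" using a b less.prems by auto
    define T where "T = sw a b ` S"
    have T: "T = insert b (S - {a})"
    proof
      show "T \<subseteq> insert b (S - {a})" using b unfolding T_def by (auto simp: sw_def)
      show "insert b (S - {a}) \<subseteq> T" unfolding T_def
      proof
        fix x assume x: "x \<in> insert b (S - {a})"
        show "x \<in> sw a b ` S"
        proof (cases "x = b")
          case True then show ?thesis using a by (metis image_eqI sw_left)
        next
          case False
          then have "x \<in> S" "x \<noteq> a" "x \<noteq> b" using x by auto
          then show ?thesis by (metis image_eqI sw_def)
        qed
      qed
    qed
    have TK: "T \<subseteq> {..<K}" using T less.prems aK by auto
    have cT: "card T = card S'" unfolding T_def using card_image[OF inj_on_subset[OF inj_sw subset_UNIV]] less.prems by metis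
    have "T - S' = (S - S') - {a}" using T b by auto
    then have lt: "card (T - S') < card (S - S')" using a finS by (metis card_Diff1_less finite_Diff DiffI)
    have "cnt N K s i n S = cnt N K s i n T" unfolding T_def by (rule cnt_sigma[OF aK])
    also have "\<dots> = cnt N K s i n S'" by (rule less.hyps[OF lt TK less.prems(2) cT])
    finally show ?thesis .
  qed
qed

lemma card_filter_sum: "finite A \<Longrightarrow> card {x\<in>A. P x} = (\<Sum>x\<in>A. if P x then 1 else 0)"
  by (simp add: sum.inter_filter[symmetric])

lemma cnt_sum:
  assumes len: "\<forall>x\<in>Om N K s. length (ch (fst x) (snd x)) = m" and i: "i < m" and fin: "finite (Om N K s)"
  shows "(\<Sum>n<N. \<Sum>S\<in>{S. S \<subseteq> {..<K} \<and> card S = t}. cnt N K s i n S) = card (Om N K s) * ((K - Suc i) choose t)"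
proof -
  define Sub where "Sub = {S. S \<subseteq> {..<K} \<and> card S = t}"
  have finSub: "finite Sub" unfolding Sub_def by (rule finite_subset[of _ "Pow {..<K}"]) auto
  define Q where "Q x n S = (i < length (ch (fst x) (snd x)) \<and> fst x ! (ch (fst x) (snd x) ! i) = n \<and> S \<inter> set (take (Suc i) (ch (fst x) (snd x))) = {})" for x n S
  have "(\<Sum>n<N. \<Sum>S\<in>Sub. cnt N K s i n S) = (\<Sum>n<N. \<Sum>S\<in>Sub. \<Sum>x\<in>Om N K s. if Q x n S then 1 else 0)"
  proof (intro sum.cong refl)
    fix n S show "cnt N K s i n S = (\<Sum>x\<in>Om N K s. if Q x n S then 1 else 0)"
      unfolding cnt_def Q_def by (rule card_filter_sum[OF fin])
  qed
  also have "\<dots> = (\<Sum>n<N. \<Sum>x\<in>Om N K s. \<Sum>S\<in>Sub. if Q x n S then 1 else 0)"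
    by (rule sum.cong[OF refl], rule sum.swap)
  also have "\<dots> = (\<Sum>x\<in>Om N K s. \<Sum>n<N. \<Sum>S\<in>Sub. if Q x n S then 1 else 0)"
    by (rule sum.swap)
  also have "\<dots> = (\<Sum>x\<in>Om N K s. (K - Suc i) choose t)"
  proof (rule sum.cong[OF refl])
    fix x assume x: "x \<in> Om N K s"
    obtain d p where xdp: "x = (d,p)" by fastforce
    have d: "d \<in> demands N K" and p: "p \<in> perms K" using x xdp by (auto simp: Om_def demand_type_def)
    have il: "i < length (ch d p)" using len x xdp i by auto
    define U where "U = set (take (Suc i) (ch d p))"
    have UK: "U \<subseteq> {..<K}" unfolding U_def by (rule order_trans[OF set_take_subset ch_props(2)[OF d p]])
    have cU: "card U = Suc i"
    proof -
      have "distinct (take (Suc i) (ch d p))" by (rule distinct_take[OF ch_props(3)[OF d p]])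
      then have "card U = length (take (Suc i) (ch d p))" unfolding U_def by (rule distinct_card)
      then show ?thesis using il by simp
    qed
    have nN: "d ! (ch d p ! i) < N" using ch_nth_lt[OF d p il] d by (auto simp: demands_def set_conv_nth)
    have "(\<Sum>n<N. \<Sum>S\<in>Sub. if Q x n S then 1 else 0) = (\<Sum>n<N. if n = d ! (ch d p ! i) then (\<Sum>S\<in>Sub. if S \<inter> U = {} then 1 else 0) else 0)"
      by (rule sum.cong[OF refl]) (auto simp: Q_def xdp il U_def)
    also have "\<dots> = (\<Sum>S\<in>Sub. if S \<inter> U = {} then 1 else 0)" using nN by (simp add: sum.delta)
    also have "\<dots> = card {S\<in>Sub. S \<inter> U = {}}" by (rule card_filter_sum[OF finSub, symmetric])
    also have "{S\<in>Sub. S \<inter> U = {}} = {S. S \<subseteq> {..<K} - U \<and> card S = t}" unfolding Sub_def by blast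
    also have "card \<dots> = card ({..<K} - U) choose t" by (rule n_subsets) simp
    also have "card ({..<K} - U) = K - Suc i"
    proof -
      have "finite U" using UK finite_subset by blast
      then show ?thesis using UK cU by (simp add: card_Diff_subset)
    qed
    finally show "(\<Sum>n<N. \<Sum>S\<in>Sub. if Q x n S then 1 else 0) = (K - Suc i) choose t" .
  qed
  also have "\<dots> = card (Om N K s) * ((K - Suc i) choose t)" by simp
  finally show ?thesis unfolding Sub_def .
qed




lemma cnt_value:
  assumes len: "\<forall>x\<in>Om N K s. length (ch (fst x) (snd x)) = m" and i: "i < m" and fin: "finite (Om N K s)"
    and N: "N > 0" and n: "n < N" and S: "S \<subseteq> {..<K}"
  shows "real (cnt N K s i n S) = real (card (Om N K s)) * real ((K - Suc i) choose card S) / (real N * real (K choose card S))"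
proof -
  define t where "t = card S"
  define Sub where "Sub = {S. S \<subseteq> {..<K} \<and> card S = t}"
  have eq: "cnt N K s i n' S' = cnt N K s i n S" if "n' < N" "S' \<in> Sub" for n' S'
  proof -
    have "cnt N K s i n' S' = cnt N K s i n' S" using that S by (intro cnt_S) (auto simp: Sub_def t_def)
    also have "\<dots> = cnt N K s i n S" using cnt_tau[OF n that(1), of K s i n S] by simp
    finally show ?thesis .
  qed
  have cSub: "card Sub = K choose t" unfolding Sub_def by (subst n_subsets) auto
  have "(\<Sum>n'<N. \<Sum>S'\<in>Sub. cnt N K s i n' S') = (\<Sum>n'<N. \<Sum>S'\<in>Sub. cnt N K s i n S)"
    by (intro sum.cong refl) (simp add: eq)
  also have "\<dots> = N * ((K choose t) * cnt N K s i n S)" using cSub by simp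
  finally have "N * ((K choose t) * cnt N K s i n S) = card (Om N K s) * ((K - Suc i) choose t)"
    using cnt_sum[OF len i fin, of t] unfolding Sub_def by simp
  then have "real N * (real (K choose t) * real (cnt N K s i n S)) = real (card (Om N K s)) * real ((K - Suc i) choose t)"
    by (metis of_nat_mult)
  moreover have "t \<le> K" unfolding t_def using S card_mono[of "{..<K}" S] by simp
  then have "real (K choose t) > 0" by simp
  ultimately show ?thesis using N unfolding t_def by (simp add: field_simps)
qed

lemma hockey:
  assumes "m \<le> K"
  shows "(\<Sum>i<m. real ((K - Suc i) choose t)) = real (K choose (Suc t)) - real ((K - m) choose (Suc t))"
  using assms
proof (induction m)
  case 0 then show ?case by simp
next
  case (Suc m)
  have "K - m = Suc (K - Suc m)" using Suc.prems by simp
  then have "(K - m) choose (Suc t) = ((K - Suc m) choose t) + ((K - Suc m) choose (Suc t))" by simp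
  then show ?case using Suc by simp
qed

lemma sum_indicator_unique:
  fixes m :: nat and Q :: "nat \<Rightarrow> bool"
  assumes "\<And>i i'. i < m \<Longrightarrow> i' < m \<Longrightarrow> Q i \<Longrightarrow> Q i' \<Longrightarrow> i = i'"
  shows "(\<Sum>i<m. if Q i then 1 else 0) = (if \<exists>i<m. Q i then 1 else (0::nat))"
proof (cases "\<exists>i<m. Q i")
  case True
  then obtain i0 where i0: "i0 < m" "Q i0" by blast
  have "(\<Sum>i<m. if Q i then 1 else 0) = (\<Sum>i<m. if i = i0 then 1 else (0::nat))"
    by (rule sum.cong[OF refl]) (use assms i0 in auto)
  also have "\<dots> = 1" using i0 by (subst sum.delta) auto
  finally show ?thesis using True by simp
next
  case False then show ?thesis by simp
qed

definition Sx :: "nat \<Rightarrow> (nat \<Rightarrow> (nat\<times>nat) set) \<Rightarrow> nat \<times> nat \<Rightarrow> nat set" where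
  "Sx K P x = {k. k < K \<and> x \<in> P k}"

lemma card_Bset_sum:
  assumes d: "d \<in> demands N K" and p: "p \<in> perms K"
  shows "card (Bset F d P (ch d p)) = (\<Sum>x\<in>posA N F. \<Sum>i<length (ch d p).
     if i < length (ch d p) \<and> d ! (ch d p ! i) = fst x \<and> Sx K P x \<inter> set (take (Suc i) (ch d p)) = {} then 1 else 0)"
proof -
  define us where "us = ch d p"
  define m where "m = length us"
  have usK: "\<forall>u\<in>set us. u < K" using ch_props(2)[OF d p] unfolding us_def by auto
  have dist: "distinct (map (nth d) us)" using ch_props(4)[OF d p] unfolding us_def .
  have lenK: "length d = K" and dN: "set d \<subseteq> {..<N}" using d by (auto simp: demands_def)
  have BA: "Bset F d P us \<subseteq> posA N F"
  proof
    fix x assume "x \<in> Bset F d P us"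
    then obtain n j i where x: "x = (n,j)" "j < F" "i < length us" "n = d!(us!i)" unfolding Bset_def by blast
    have "us!i < K" using usK x(3) by auto
    then have "n < N" using x(4) lenK dN by (auto simp: set_conv_nth)
    then show "x \<in> posA N F" using x by (simp add: posA_def)
  qed
  have tk: "(\<forall>l\<le>i. x \<notin> P (us!l)) = (Sx K P x \<inter> set (take (Suc i) us) = {})" if i: "i < m" for x i
  proof -
    have "set (take (Suc i) us) = {us!l | l. l \<le> i}"
    proof
      show "set (take (Suc i) us) \<subseteq> {us!l | l. l \<le> i}"
      proof
        fix y assume "y \<in> set (take (Suc i) us)"
        then obtain l where l: "l < length (take (Suc i) us)" "y = take (Suc i) us ! l" by (auto simp: in_set_conv_nth)
        then show "y \<in> {us!l | l. l \<le> i}" by auto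
      qed
      show "{us!l | l. l \<le> i} \<subseteq> set (take (Suc i) us)"
      proof
        fix y assume "y \<in> {us!l | l. l \<le> i}"
        then obtain l where l: "l \<le> i" "y = us!l" by blast
        have "l < length (take (Suc i) us)" using l i unfolding m_def by auto
        moreover have "take (Suc i) us ! l = us ! l" using l by simp
        ultimately show "y \<in> set (take (Suc i) us)" using l by (metis nth_mem)
      qed
    qed
    moreover have "us!l < K" if "l \<le> i" for l using usK i that unfolding m_def by auto
    ultimately show ?thesis unfolding Sx_def by auto
  qed
  have "card (Bset F d P us) = (\<Sum>x\<in>posA N F. if x \<in> Bset F d P us then 1 else 0)"
    using card_filter_sum[of "posA N F" "\<lambda>x. x \<in> Bset F d P us"] BA by (simp add: posA_def Int_absorb1 Int_def[symmetric])
  also have "\<dots> = (\<Sum>x\<in>posA N F. \<Sum>i<m. if i < m \<and> d ! (us ! i) = fst x \<and> Sx K P x \<inter> set (take (Suc i) us) = {} then 1 else 0)"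
  proof (rule sum.cong[OF refl])
    fix x assume x: "x \<in> posA N F"
    obtain n j where xnj: "x = (n,j)" "j < F" using x by (auto simp: posA_def)
    have uq: "i = i'" if "i < m" "i' < m" "d!(us!i) = fst x" "d!(us!i') = fst x" for i i'
      using that dist unfolding m_def by (metis length_map nth_eq_iff_index_eq nth_map)
    have "(\<Sum>i<m. if i < m \<and> d ! (us ! i) = fst x \<and> Sx K P x \<inter> set (take (Suc i) us) = {} then 1 else (0::nat))
        = (if \<exists>i<m. i < m \<and> d ! (us ! i) = fst x \<and> Sx K P x \<inter> set (take (Suc i) us) = {} then 1 else 0)"
      by (rule sum_indicator_unique) (use uq in blast)
    also have "(\<exists>i<m. i < m \<and> d ! (us ! i) = fst x \<and> Sx K P x \<inter> set (take (Suc i) us) = {}) = (x \<in> Bset F d P us)"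
    proof -
      have e1: "\<forall>i<m. (i < m \<and> d ! (us ! i) = fst x \<and> Sx K P x \<inter> set (take (Suc i) us) = {}) = (n = d!(us!i) \<and> (\<forall>l\<le>i. x \<notin> P(us!l)))"
        using tk xnj by auto
      have e2: "(x \<in> Bset F d P us) = (\<exists>i<m. n = d!(us!i) \<and> (\<forall>l\<le>i. x \<notin> P(us!l)))"
        using xnj unfolding Bset_def m_def by auto
      show ?thesis using e1 e2 by blast
    qed
    finally show "(if x \<in> Bset F d P us then 1 else (0::nat)) = (\<Sum>i<m. if i < m \<and> d ! (us ! i) = fst x \<and> Sx K P x \<inter> set (take (Suc i) us) = {} then 1 else 0)" by (rule sym)
  qed
  finally show ?thesis unfolding us_def m_def .
qed




lemma conv_bound:
  fixes f l :: "nat \<Rightarrow> real"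
  assumes fnn: "\<forall>i\<le>K. 0 \<le> f i" and fK: "f K = 0" and lnn: "\<forall>i\<le>K. 0 \<le> l i" and l1: "(\<Sum>i\<le>K. l i) = 1"
    and yz: "(\<Sum>i\<le>K. l i * real i) \<le> z" and zK: "z \<le> real K"
  shows "lower_conv_env K f z \<le> (\<Sum>i\<le>K. l i * f i)"
proof -
  define y where "y = (\<Sum>i\<le>K. l i * real i)"
  have "y \<le> (\<Sum>i\<le>K. l i * real K)" unfolding y_def
    by (rule sum_mono) (use lnn in \<open>auto intro: mult_left_mono\<close>)
  also have "\<dots> = real K" using l1 by (simp flip: sum_distrib_right)
  finally have yK: "y \<le> real K" .
  define th where "th = (if y < real K then (z - y) / (real K - y) else 0)"
  have th0: "0 \<le> th" and th1: "th \<le> 1" using yz zK unfolding th_def y_def[symmetric] by (auto simp: divide_simps)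
  define l' where "l' i = (1 - th) * l i + (if i = K then th else 0)" for i
  have s1: "(\<Sum>i\<le>K. l' i) = 1"
  proof -
    have "(\<Sum>i\<le>K. l' i) = (\<Sum>i\<le>K. (1 - th) * l i) + (\<Sum>i\<le>K. if i = K then th else 0)"
      unfolding l'_def by (rule sum.distrib)
    also have "\<dots> = (1 - th) + th" using l1 by (simp add: sum_distrib_left[symmetric])
    finally show ?thesis by simp
  qed
  have s2: "(\<Sum>i\<le>K. l' i * real i) = z"
  proof -
    have "(\<Sum>i\<le>K. l' i * real i) = (\<Sum>i\<le>K. (1 - th) * (l i * real i)) + (\<Sum>i\<le>K. if i = K then th * real K else 0)"
      unfolding l'_def by (subst sum.distrib[symmetric]) (rule sum.cong, auto simp: algebra_simps)
    also have "\<dots> = (1 - th) * y + th * real K" by (simp add: sum_distrib_left[symmetric] y_def)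
    also have "\<dots> = z"
    proof (cases "y < real K")
      case True
      have e0: "th * (real K - y) = z - y" using True by (simp add: th_def)
      have e: "th * real K - th * y = z - y" using e0 by (simp add: right_diff_distrib)
      have "(1 - th) * y + th * real K = y + (th * real K - th * y)" by (simp add: algebra_simps)
      then show ?thesis using e by linarith
    next
      case False
      then have "y = real K" "z = real K" using yK yz zK unfolding y_def by auto
      then show ?thesis unfolding th_def by simp
    qed
    finally show ?thesis .
  qed
  have s3: "(\<Sum>i\<le>K. l' i * f i) = (1 - th) * (\<Sum>i\<le>K. l i * f i)"
  proof -
    have "(\<Sum>i\<le>K. l' i * f i) = (\<Sum>i\<le>K. (1 - th) * (l i * f i)) + (\<Sum>i\<le>K. if i = K then th * f K else 0)"
      unfolding l'_def by (subst sum.distrib[symmetric]) (rule sum.cong, auto simp: algebra_simps)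
    then show ?thesis using fK by (simp add: sum_distrib_left[symmetric])
  qed
  have l'nn: "\<forall>i\<le>K. 0 \<le> l' i" using lnn th0 th1 unfolding l'_def by auto
  have mem: "(\<Sum>i\<le>K. l' i * f i) \<in> {\<Sum>i\<le>K. l i * f i | l :: nat \<Rightarrow> real.
       (\<forall>i\<le>K. 0 \<le> l i) \<and> (\<Sum>i\<le>K. l i) = 1 \<and> (\<Sum>i\<le>K. l i * real i) = z}"
    using l'nn s1 s2 by blast
  have bdd: "bdd_below {\<Sum>i\<le>K. l i * f i | l :: nat \<Rightarrow> real.
       (\<forall>i\<le>K. 0 \<le> l i) \<and> (\<Sum>i\<le>K. l i) = 1 \<and> (\<Sum>i\<le>K. l i * real i) = z}"
    by (rule bdd_belowI[where m=0]) (use fnn in \<open>auto intro!: sum_nonneg\<close>)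
  have "lower_conv_env K f z \<le> (\<Sum>i\<le>K. l' i * f i)"
    unfolding lower_conv_env_def by (rule cInf_lower[OF mem bdd])
  also have "\<dots> \<le> (\<Sum>i\<le>K. l i * f i)"
  proof -
    have "0 \<le> (\<Sum>i\<le>K. l i * f i)" using lnn fnn by (auto intro!: sum_nonneg)
    then have "th * (\<Sum>i\<le>K. l i * f i) \<ge> 0" using th0 by simp
    then show ?thesis unfolding s3 by (simp add: left_diff_distrib)
  qed
  finally show ?thesis .
qed

lemma fiber_sum:
  fixes g :: "nat \<Rightarrow> real"
  assumes "finite A" "\<forall>x\<in>A. t x \<le> K"
  shows "(\<Sum>x\<in>A. g (t x)) = (\<Sum>i\<le>K. real (card {x\<in>A. t x = i}) * g i)"
proof -
  have "(\<Sum>x\<in>A. g (t x)) = (\<Sum>x\<in>A. \<Sum>i\<le>K. if t x = i then g i else 0)"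
    by (rule sum.cong[OF refl]) (use assms in \<open>simp add: sum.delta'\<close>)
  also have "\<dots> = (\<Sum>i\<le>K. \<Sum>x\<in>A. if t x = i then g i else 0)" by (rule sum.swap)
  also have "\<dots> = (\<Sum>i\<le>K. real (card {x\<in>A. t x = i}) * g i)"
  proof (rule sum.cong[OF refl])
    fix i
    have "(\<Sum>x\<in>A. if t x = i then g i else 0) = (\<Sum>x\<in>{x\<in>A. t x = i}. g i)"
      by (rule sum.inter_filter[symmetric, OF assms(1)])
    then show "(\<Sum>x\<in>A. if t x = i then g i else 0) = real (card {x\<in>A. t x = i}) * g i" by simp
  qed
  finally show ?thesis .
qed

lemma sum_Sx:
  assumes "\<forall>k<K. real (card (P k)) \<le> M * real F" "\<forall>k<K. finite (P k)"
  shows "real (\<Sum>x\<in>posA N F. card (Sx K P x)) \<le> real K * M * real F"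
proof -
  have finA: "finite (posA N F)" by (simp add: posA_def)
  have "(\<Sum>x\<in>posA N F. card (Sx K P x)) = (\<Sum>x\<in>posA N F. \<Sum>k<K. if x \<in> P k then 1 else 0)"
  proof (rule sum.cong[OF refl])
    fix x show "card (Sx K P x) = (\<Sum>k<K. if x \<in> P k then 1 else 0)"
      unfolding Sx_def using card_filter_sum[of "{..<K}" "\<lambda>k. x \<in> P k"] by (simp add: lessThan_def Collect_conj_eq[symmetric])
  qed
  also have "\<dots> = (\<Sum>k<K. \<Sum>x\<in>posA N F. if x \<in> P k then 1 else 0)" by (rule sum.swap)
  also have "\<dots> = (\<Sum>k<K. card {x\<in>posA N F. x \<in> P k})"
    by (rule sum.cong[OF refl]) (rule card_filter_sum[OF finA, symmetric])
  also have "\<dots> \<le> (\<Sum>k<K. card (P k))"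
    by (rule sum_mono) (use assms(2) in \<open>auto intro: card_mono\<close>)
  finally have "real (\<Sum>x\<in>posA N F. card (Sx K P x)) \<le> (\<Sum>k<K. real (card (P k)))"
    by (metis of_nat_le_iff of_nat_sum)
  also have "\<dots> \<le> (\<Sum>k<K. M * real F)" by (rule sum_mono) (use assms(1) in auto)
  finally show ?thesis by simp
qed




lemma finite_demands: "finite (demands N K)"
proof -
  have "demands N K \<subseteq> {xs. set xs \<subseteq> {..<N} \<and> length xs = K}" by (auto simp: demands_def)
  moreover have "finite {xs. set xs \<subseteq> {..<N} \<and> length xs = (K::nat)}" by (rule finite_lists_length_eq) simp
  ultimately show ?thesis by (rule finite_subset)
qed

lemma finite_perms: "finite (perms K)"
proof -
  have "perms K \<subseteq> {xs. set xs \<subseteq> {..<K} \<and> length xs = K}"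
  proof
    fix p assume "p \<in> perms K"
    then have p: "distinct p" "set p = {..<K}" by (auto simp: perms_def)
    have "length p = card (set p)" using distinct_card[OF p(1)] by simp
    then show "p \<in> {xs. set xs \<subseteq> {..<K} \<and> length xs = K}" using p by simp
  qed
  moreover have "finite {xs. set xs \<subseteq> {..<K} \<and> length xs = (K::nat)}" by (rule finite_lists_length_eq) simp
  ultimately show ?thesis by (rule finite_subset)
qed

lemma perms_ne: "[0..<K] \<in> perms K" by (auto simp: perms_def)

theorem lemma2:
  fixes N K F :: nat and M eps :: real and s :: "nat list"
    and P :: "nat \<Rightarrow> (nat \<times> nat) set"
  assumes "N > 0" and "K > 0" and "F > 0"
    and "0 \<le> M" and "M \<le> real N"
    and "eps > 0"
    and "s \<in> stats N ` demands N K"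
    and "uncoded_prefetching N K F M P"
  shows "avg_rate N K F eps s P \<ge>
     lower_conv_env K
       (\<lambda>t. (real (K choose (t + 1)) - real ((K - Ne s) choose (t + 1))) / real (K choose t))
       (real K * M / real N)
     - (1 / real F + real (Ne s) ^ 2 * eps)"
proof -
  note N = assms(1) and Kp = assms(2) and F = assms(3) and M0 = assms(4) and MN = assms(5)
    and eps = assms(6) and sS = assms(7) and up = assms(8)
  define fA where "fA = (\<lambda>t. (real (K choose (t + 1)) - real ((K - Ne s) choose (t + 1))) / real (K choose t))"
  define c where "c = 1 / real F + real (Ne s) ^ 2 * eps"
  define D where "D = demand_type N K s"
  define Q where "Q = perms K"
  define m where "m = Ne s"
  define A where "A = posA N F"
  define t where "t x = card (Sx K P x)" for x
  obtain d0 where d0: "d0 \<in> demands N K" "s = stats N d0" using sS by blast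
  have d0D: "d0 \<in> D" using d0 by (simp add: D_def demand_type_def)
  have finD: "finite D" unfolding D_def demand_type_def using finite_demands by simp
  have cardD: "card D > 0" using finD d0D card_gt_0_iff by blast
  have finQ: "finite Q" unfolding Q_def by (rule finite_perms)
  have cardQ: "card Q > 0" using finQ perms_ne[of K] card_gt_0_iff unfolding Q_def by blast
  have OmDQ: "Om N K s = D \<times> Q" by (simp add: Om_def D_def Q_def)
  have finOm: "finite (Om N K s)" using finD finQ OmDQ by simp
  have cardOm: "card (Om N K s) = card D * card Q" using OmDQ by (simp add: card_cartesian_product)
  have dD: "d \<in> demands N K" "stats N d = s" if "d \<in> D" for d using that by (auto simp: D_def demand_type_def)
  have lenm: "length (ch d p) = m" if "d \<in> D" "p \<in> Q" for d p
    using ch_props(1)[OF dD(1)[OF that(1)], of p] that Ne_stats[OF dD(1)[OF that(1)]] dD(2)[OF that(1)]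
    unfolding Q_def m_def by simp
  have lenOm: "\<forall>x\<in>Om N K s. length (ch (fst x) (snd x)) = m" using lenm OmDQ by auto
  have mK: "m \<le> K"
  proof -
    have "m = card (set d0)" using Ne_stats[OF d0(1)] d0(2) by (simp add: m_def)
    also have "\<dots> \<le> length d0" by (rule card_length)
    also have "\<dots> = K" using d0(1) by (simp add: demands_def)
    finally show ?thesis .
  qed
  have PA: "\<forall>k<K. P k \<subseteq> A" "\<forall>k<K. real (card (P k)) \<le> M * real F"
    using up unfolding uncoded_prefetching_def A_def posA_def by auto
  have finP: "\<forall>k<K. finite (P k)" using PA(1) finite_subset[of _ A] by (auto simp: A_def posA_def)
  have finA: "finite A" by (simp add: A_def posA_def)
  have cardA: "card A = N * F" by (simp add: A_def posA_def card_cartesian_product)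
  define b where "b x = card (Bset F (fst x) P (ch (fst x) (snd x)))" for x :: "nat list \<times> nat list"
  have pb: "opt_rate N K F eps d P \<ge> real (b (d,p)) / real F - c" if "d \<in> D" "p \<in> Q" for d p
  proof -
    have "set (ch d p) \<subseteq> {..<K}" using ch_props(2)[OF dD(1)[OF that(1)]] that(2) by (simp add: Q_def)
    then show ?thesis using opt_rate_bound[OF dD(1)[OF that(1)] _ _ F, of "ch d p" eps P] eps lenm[OF that]
      by (simp add: b_def c_def m_def)
  qed
  have avg1: "avg_rate N K F eps s P \<ge> (\<Sum>x\<in>Om N K s. real (b x)) / (real F * real (card (Om N K s))) - c"
  proof -
    have "(\<Sum>d\<in>D. opt_rate N K F eps d P) * real (card Q) = (\<Sum>d\<in>D. \<Sum>p\<in>Q. opt_rate N K F eps d P)"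
      by (simp add: sum_distrib_right mult.commute[of "real (card Q)"])
    also have "\<dots> \<ge> (\<Sum>d\<in>D. \<Sum>p\<in>Q. real (b (d,p)) / real F - c)"
      by (intro sum_mono) (use pb in auto)
    finally have "(\<Sum>d\<in>D. \<Sum>p\<in>Q. real (b (d,p)) / real F - c) \<le> (\<Sum>d\<in>D. opt_rate N K F eps d P) * real (card Q)" .
    moreover have "(\<Sum>d\<in>D. \<Sum>p\<in>Q. real (b (d,p)) / real F - c) = (\<Sum>x\<in>Om N K s. real (b x)) / real F - real (card (Om N K s)) * c"
    proof -
      have "(\<Sum>d\<in>D. \<Sum>p\<in>Q. real (b (d,p)) / real F - c) = (\<Sum>x\<in>D \<times> Q. real (b x) / real F - c)"
        by (simp add: sum.cartesian_product)
      also have "\<dots> = (\<Sum>x\<in>D \<times> Q. real (b x)) / real F - real (card (D \<times> Q)) * c"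
        by (simp add: sum_subtractf sum_divide_distrib)
      finally show ?thesis using OmDQ by simp
    qed
    ultimately have "(\<Sum>x\<in>Om N K s. real (b x)) / real F - real (card (Om N K s)) * c \<le> (\<Sum>d\<in>D. opt_rate N K F eps d P) * real (card Q)" by simp
    then have "((\<Sum>x\<in>Om N K s. real (b x)) / real F - real (card (Om N K s)) * c) / real (card (Om N K s))
        \<le> (\<Sum>d\<in>D. opt_rate N K F eps d P) * real (card Q) / real (card (Om N K s))"
      using cardD cardQ cardOm by (intro divide_right_mono) auto
    moreover have "((\<Sum>x\<in>Om N K s. real (b x)) / real F - real (card (Om N K s)) * c) / real (card (Om N K s))
        = (\<Sum>x\<in>Om N K s. real (b x)) / (real F * real (card (Om N K s))) - c"
      using cardD cardQ cardOm F by (simp add: field_simps)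
    moreover have "(\<Sum>d\<in>D. opt_rate N K F eps d P) * real (card Q) / real (card (Om N K s)) = avg_rate N K F eps s P"
      using cardD cardQ cardOm by (simp add: avg_rate_def D_def)
    ultimately show ?thesis by simp
  qed
  have SxK: "Sx K P x \<subseteq> {..<K}" for x by (auto simp: Sx_def)
  have tK: "t x \<le> K" for x
  proof -
    have "card (Sx K P x) \<le> card {..<K}" by (rule card_mono[OF finite_lessThan SxK])
    then show ?thesis unfolding t_def by simp
  qed
  have NF: "real N * real F > 0" using N F by simp
  have bsum: "(\<Sum>w\<in>Om N K s. b w) = (\<Sum>x\<in>A. \<Sum>i<m. cnt N K s i (fst x) (Sx K P x))"
  proof -
    have "(\<Sum>w\<in>Om N K s. b w) = (\<Sum>w\<in>Om N K s. \<Sum>x\<in>A. \<Sum>i<m.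
        if i < length (ch (fst w) (snd w)) \<and> fst w ! (ch (fst w) (snd w) ! i) = fst x \<and> Sx K P x \<inter> set (take (Suc i) (ch (fst w) (snd w))) = {} then 1 else 0)"
    proof (rule sum.cong[OF refl])
      fix w assume w: "w \<in> Om N K s"
      then have w': "fst w \<in> D" "snd w \<in> Q" unfolding OmDQ by (auto simp: mem_Times_iff)
      show "b w = (\<Sum>x\<in>A. \<Sum>i<m.
        if i < length (ch (fst w) (snd w)) \<and> fst w ! (ch (fst w) (snd w) ! i) = fst x \<and> Sx K P x \<inter> set (take (Suc i) (ch (fst w) (snd w))) = {} then 1 else 0)"
      proof -
        obtain d p where wdp: "w = (d,p)" by fastforce
        have dpD: "d \<in> D" "p \<in> Q" using w' wdp by auto
        have pP: "p \<in> perms K" using dpD(2) by (simp add: Q_def)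
        note cb = card_Bset_sum[OF dD(1)[OF dpD(1)] pP, of F P]
        show ?thesis unfolding wdp fst_conv snd_conv b_def A_def lenm[OF dpD]
          using cb[unfolded lenm[OF dpD]] .
      qed
    qed
    also have "\<dots> = (\<Sum>x\<in>A. \<Sum>w\<in>Om N K s. \<Sum>i<m.
        if i < length (ch (fst w) (snd w)) \<and> fst w ! (ch (fst w) (snd w) ! i) = fst x \<and> Sx K P x \<inter> set (take (Suc i) (ch (fst w) (snd w))) = {} then 1 else 0)"
      by (rule sum.swap)
    also have "\<dots> = (\<Sum>x\<in>A. \<Sum>i<m. \<Sum>w\<in>Om N K s.
        if i < length (ch (fst w) (snd w)) \<and> fst w ! (ch (fst w) (snd w) ! i) = fst x \<and> Sx K P x \<inter> set (take (Suc i) (ch (fst w) (snd w))) = {} then 1 else 0)"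
      by (rule sum.cong[OF refl], rule sum.swap)
    also have "\<dots> = (\<Sum>x\<in>A. \<Sum>i<m. cnt N K s i (fst x) (Sx K P x))"
    proof (intro sum.cong refl)
      fix x i show "(\<Sum>w\<in>Om N K s.
        if i < length (ch (fst w) (snd w)) \<and> fst w ! (ch (fst w) (snd w) ! i) = fst x \<and> Sx K P x \<inter> set (take (Suc i) (ch (fst w) (snd w))) = {} then 1 else 0)
        = cnt N K s i (fst x) (Sx K P x)"
        unfolding cnt_def by (rule card_filter_sum[OF finOm, symmetric])
    qed
    finally show ?thesis .
  qed
  have bsum2: "(\<Sum>w\<in>Om N K s. real (b w)) = real (card (Om N K s)) / real N * (\<Sum>x\<in>A. fA (t x))"
  proof -
    have "(\<Sum>w\<in>Om N K s. real (b w)) = (\<Sum>x\<in>A. \<Sum>i<m. real (cnt N K s i (fst x) (Sx K P x)))"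
      using arg_cong[OF bsum, of real] by (simp add: of_nat_sum)
    also have "\<dots> = (\<Sum>x\<in>A. \<Sum>i<m. real (card (Om N K s)) * real ((K - Suc i) choose t x) / (real N * real (K choose t x)))"
    proof (intro sum.cong refl)
      fix x i assume x: "x \<in> A" and i: "i \<in> {..<m}"
      have "fst x < N" using x by (auto simp: A_def posA_def)
      then show "real (cnt N K s i (fst x) (Sx K P x)) = real (card (Om N K s)) * real ((K - Suc i) choose t x) / (real N * real (K choose t x))"
        using cnt_value[OF lenOm _ finOm N _ SxK] i unfolding t_def by simp
    qed
    also have "\<dots> = (\<Sum>x\<in>A. real (card (Om N K s)) / real N * fA (t x))"
    proof (rule sum.cong[OF refl])
      fix x
      have "(\<Sum>i<m. real (card (Om N K s)) * real ((K - Suc i) choose t x) / (real N * real (K choose t x)))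
          = real (card (Om N K s)) / (real N * real (K choose t x)) * (\<Sum>i<m. real ((K - Suc i) choose t x))"
        by (simp add: sum_distrib_left)
      also have "\<dots> = real (card (Om N K s)) / real N * fA (t x)"
        using hockey[OF mK, of "t x"] unfolding fA_def m_def by simp
      finally show "(\<Sum>i<m. real (card (Om N K s)) * real ((K - Suc i) choose t x) / (real N * real (K choose t x)))
          = real (card (Om N K s)) / real N * fA (t x)" .
    qed
    also have "\<dots> = real (card (Om N K s)) / real N * (\<Sum>x\<in>A. fA (t x))" by (simp add: sum_distrib_left)
    finally show ?thesis .
  qed
  define l where "l i = real (card {x\<in>A. t x = i}) / (real N * real F)" for i
  have main: "(\<Sum>w\<in>Om N K s. real (b w)) / (real F * real (card (Om N K s))) = (\<Sum>i\<le>K. l i * fA i)"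
  proof -
    have "(\<Sum>w\<in>Om N K s. real (b w)) / (real F * real (card (Om N K s))) = (\<Sum>x\<in>A. fA (t x) / (real N * real F))"
      unfolding bsum2 using cardD cardQ cardOm N F by (simp add: sum_divide_distrib field_simps)
    also have "\<dots> = (\<Sum>i\<le>K. real (card {x\<in>A. t x = i}) * (fA i / (real N * real F)))"
      by (rule fiber_sum[OF finA]) (simp add: tK)
    also have "\<dots> = (\<Sum>i\<le>K. l i * fA i)" by (simp add: l_def)
    finally show ?thesis .
  qed
  have conv: "lower_conv_env K fA (real K * M / real N) \<le> (\<Sum>i\<le>K. l i * fA i)"
  proof (rule conv_bound)
    show "\<forall>i\<le>K. 0 \<le> fA i"
    proof (intro allI impI)
      fix i
      have "(K - Ne s) choose (i+1) \<le> K choose (i+1)" by (rule binomial_right_mono) simp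
      then show "0 \<le> fA i" unfolding fA_def by (intro divide_nonneg_nonneg) auto
    qed
    show "fA K = 0" unfolding fA_def by (simp add: binomial_eq_0)
    show "\<forall>i\<le>K. 0 \<le> l i" unfolding l_def by simp
    have "(\<Sum>x\<in>A. 1 / (real N * real F)) = (\<Sum>i\<le>K. real (card {x\<in>A. t x = i}) * (1 / (real N * real F)))"
      by (rule fiber_sum[OF finA]) (simp add: tK)
    moreover have "(\<Sum>x\<in>A. 1 / (real N * real F)) = 1" using cardA N F by simp
    ultimately show "(\<Sum>i\<le>K. l i) = 1" by (simp add: l_def)
    have "(\<Sum>x\<in>A. real (t x) / (real N * real F)) = (\<Sum>i\<le>K. real (card {x\<in>A. t x = i}) * (real i / (real N * real F)))"
      by (rule fiber_sum[OF finA]) (simp add: tK)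
    then have "(\<Sum>i\<le>K. l i * real i) = (\<Sum>x\<in>A. real (t x)) / (real N * real F)"
      by (simp add: l_def sum_divide_distrib)
    also have "\<dots> \<le> (real K * M * real F) / (real N * real F)"
    proof (rule divide_right_mono)
      show "(\<Sum>x\<in>A. real (t x)) \<le> real K * M * real F"
        using sum_Sx[OF PA(2) finP, of N] unfolding t_def A_def by simp
    qed (use NF in simp)
    also have "\<dots> = real K * M / real N" using F by simp
    finally show "(\<Sum>i\<le>K. l i * real i) \<le> real K * M / real N" .
    have "real K * M \<le> real K * real N" by (rule mult_left_mono[OF MN]) simp
    then have "real K * M / real N \<le> real K * real N / real N" by (rule divide_right_mono) simp
    then show "real K * M / real N \<le> real K" using N by simp
  qed
  show ?thesis using avg1 main conv unfolding fA_def c_def by simp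
qed


end
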